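(* Let $F=(f_1,\dots,f_p)\in\mathbb{C}[X_1,\dots,X_n]^p$ be such that $\langle F\rangle$ is radical and $V(F)\subset\mathbb{C}^n$ is smooth and equidimensional of dimension $\delta=n-p$, and let $i\in\{1,\dots,\delta+1\}$. Suppose $F$ satisfies $\mathbf{H}_i(1)$, $\mathbf{H}_i(2)$, $\mathbf{H}_i(3)$, and that $\bm\sigma=(\sigma_1,\dots,\sigma_{i-1})\in\mathbb{C}^{i-1}$ satisfies $\mathbf{H}'_i$. Then for any $\bm u=(u_1,\dots,u_p)\in\mathbb{C}^p$, $0$ is a regular value of the $n+p$ polynomials \[X_1-\sigma_1,\dots,X_{i-1}-\sigma_{i-1},\ F,\ [L_1\cdots L_p]\cdot\mathrm{jac}(F,i),\ u_1L_1+\dots+u_pL_p-1,\] i.e. at every common zero in $\mathbb{C}^{n+p}$ their Jacobian with respect to $(X_1,\dots,X_n,L_1,\dots,L_p)$ has rank $n+p$.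
   Context: $L_1,\dots,L_p$ are new variables; $\mathrm{jac}(F,i)$ is the $p\times(n-i)$ matrix of partial derivatives $\partial f_k/\partial X_j$, $j=i+1,\dots,n$. $W(i,F)=\{\bm x: F(\bm x)=0,\ \mathrm{rank}(\mathrm{jac}(F,i)(\bm x))<p\}$. $\mathbf{H}_i(1)$: $W(i,F)$ is empty or $(i-1)$-equidimensional. $\mathbf{H}_i(2)$: at every $(\bm x,\bm\ell)$ with $\bm\ell\ne0$ cancelling $F,\ [L_1\cdots L_p]\cdot\mathrm{jac}(F,i)$, their Jacobian with respect to $(X,L)$ has rank $n+p-i$. $\mathbf{H}_i(3)$: $W(i,F)$ is empty or $\mathbb{C}[X_1,\dots,X_{i-1}]\to\mathbb{C}[X_1,\dots,X_n]/I(W(i,F))$ is injective and integral. $\mathbf{H}'_i$: at every common zero $(\bm x,\bm\ell)$ with $\bm\ell\ne0$ of the $n+p-1$ polynomials $X_1-\sigma_1,\dots,X_{i-1}-\sigma_{i-1},F,[L_1\cdots L_p]\cdot\mathrm{jac}(F,i)$, their Jacobian with respect to $(X,L)$ has rank $n+p-1$. *)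

theory Defs
  imports Complex_Main "Jordan_Normal_Form.DL_Rank"
begin

text \<open>Points of complex affine n-space: functions nat => complex vanishing at coordinates >= n.
  Coordinate j (0-based) corresponds to the paper's variable X_(j+1).\<close>
definition cpoints :: "nat \<Rightarrow> (nat \<Rightarrow> complex) set" where
  "cpoints n = {x. \<forall>j\<ge>n. x j = 0}"

text \<open>Polynomials in the variables X_1..X_n, viewed as polynomial functions
  (C is infinite, so this is isomorphic to the polynomial ring).\<close>
inductive_set polyfun :: "nat \<Rightarrow> ((nat \<Rightarrow> complex) \<Rightarrow> complex) set" for n :: nat where
  pconst: "(\<lambda>x. c) \<in> polyfun n"
| pvar: "j < n \<Longrightarrow> (\<lambda>x. x j) \<in> polyfun n"
| padd: "f \<in> polyfun n \<Longrightarrow> g \<in> polyfun n \<Longrightarrow> (\<lambda>x. f x + g x) \<in> polyfun n"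
| pmult: "f \<in> polyfun n \<Longrightarrow> g \<in> polyfun n \<Longrightarrow> (\<lambda>x. f x * g x) \<in> polyfun n"

definition gen_ideal :: "nat \<Rightarrow> nat \<Rightarrow> (nat \<Rightarrow> (nat \<Rightarrow> complex) \<Rightarrow> complex)
    \<Rightarrow> ((nat \<Rightarrow> complex) \<Rightarrow> complex) set" where
  "gen_ideal n p F = {h. \<exists>g. (\<forall>k<p. g k \<in> polyfun n) \<and> h = (\<lambda>x. \<Sum>k<p. g k x * F k x)}"

definition radical_in :: "nat \<Rightarrow> ((nat \<Rightarrow> complex) \<Rightarrow> complex) set \<Rightarrow> bool" where
  "radical_in n I \<longleftrightarrow> (\<forall>g\<in>polyfun n. \<forall>m. (\<lambda>x. g x ^ m) \<in> I \<longrightarrow> g \<in> I)"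

definition zero_set :: "nat \<Rightarrow> nat \<Rightarrow> (nat \<Rightarrow> (nat \<Rightarrow> complex) \<Rightarrow> complex)
    \<Rightarrow> (nat \<Rightarrow> complex) set" where
  "zero_set n p F = {x \<in> cpoints n. \<forall>k<p. F k x = 0}"

definition van_ideal :: "nat \<Rightarrow> (nat \<Rightarrow> complex) set \<Rightarrow> ((nat \<Rightarrow> complex) \<Rightarrow> complex) set" where
  "van_ideal n V = {g \<in> polyfun n. \<forall>x\<in>V. g x = 0}"

definition zclosed :: "nat \<Rightarrow> (nat \<Rightarrow> complex) set \<Rightarrow> bool" where
  "zclosed n Z \<longleftrightarrow> (\<exists>S \<subseteq> polyfun n. Z = {x \<in> cpoints n. \<forall>g\<in>S. g x = 0})"

definition zirreducible :: "nat \<Rightarrow> (nat \<Rightarrow> complex) set \<Rightarrow> bool" where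
  "zirreducible n Z \<longleftrightarrow> zclosed n Z \<and> Z \<noteq> {} \<and>
     (\<forall>A B. zclosed n A \<longrightarrow> zclosed n B \<longrightarrow> Z = A \<union> B \<longrightarrow> Z = A \<or> Z = B)"

definition zcomponent :: "nat \<Rightarrow> (nat \<Rightarrow> complex) set \<Rightarrow> (nat \<Rightarrow> complex) set \<Rightarrow> bool" where
  "zcomponent n V Z \<longleftrightarrow> Z \<subseteq> V \<and> zirreducible n Z \<and>
     (\<forall>Z'. zirreducible n Z' \<longrightarrow> Z \<subseteq> Z' \<longrightarrow> Z' \<subseteq> V \<longrightarrow> Z' = Z)"

definition irr_chain :: "nat \<Rightarrow> (nat \<Rightarrow> complex) set \<Rightarrow> nat \<Rightarrow> bool" where
  "irr_chain n V k \<longleftrightarrow> (\<exists>Z. (\<forall>l\<le>k. zirreducible n (Z l) \<and> Z l \<subseteq> V) \<and>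
     (\<forall>l<k. Z l \<subset> Z (Suc l)))"

definition zdim_eq :: "nat \<Rightarrow> (nat \<Rightarrow> complex) set \<Rightarrow> nat \<Rightarrow> bool" where
  "zdim_eq n V d \<longleftrightarrow> irr_chain n V d \<and> \<not> irr_chain n V (Suc d)"

definition equidim :: "nat \<Rightarrow> (nat \<Rightarrow> complex) set \<Rightarrow> nat \<Rightarrow> bool" where
  "equidim n V d \<longleftrightarrow> zclosed n V \<and> (\<forall>Z. zcomponent n V Z \<longrightarrow> zdim_eq n Z d)"

definition pd :: "nat \<Rightarrow> ((nat \<Rightarrow> complex) \<Rightarrow> complex) \<Rightarrow> (nat \<Rightarrow> complex) \<Rightarrow> complex" where
  "pd j f x = (THE D. ((\<lambda>t. f (x(j := t))) has_field_derivative D) (at (x j)))"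

definition crank :: "complex mat \<Rightarrow> nat" where
  "crank A = vec_space.rank (dim_row A) A"

definition jac_rank :: "nat \<Rightarrow> ((nat \<Rightarrow> complex) \<Rightarrow> complex) list \<Rightarrow> (nat \<Rightarrow> complex) \<Rightarrow> nat" where
  "jac_rank N gs z = crank (mat (length gs) N (\<lambda>(a, b). pd b (gs ! a) z))"

text \<open>V is smooth and equidimensional of dimension d: equidimensional, and at every point
  the tangent space (orthogonal of the gradients of I(V)) has dimension d.\<close>
definition smooth_equidim :: "nat \<Rightarrow> (nat \<Rightarrow> complex) set \<Rightarrow> nat \<Rightarrow> bool" where
  "smooth_equidim n V d \<longleftrightarrow> equidim n V d \<and>
     (\<forall>x\<in>V. \<exists>gs. set gs \<subseteq> van_ideal n V \<and> jac_rank n gs x + d = n \<and>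
        (\<forall>hs. set hs \<subseteq> van_ideal n V \<longrightarrow> jac_rank n hs x + d \<le> n))"

text \<open>In C^(n+p) the coordinates 0..n-1 are X_1..X_n and n..n+p-1 are L_1..L_p.
  The n-i polynomials [L_1 ... L_p] . jac(F,i) (paper's columns X_(i+1)..X_n, i.e.
  coordinates i..n-1).\<close>
definition Ljac :: "nat \<Rightarrow> nat \<Rightarrow> (nat \<Rightarrow> (nat \<Rightarrow> complex) \<Rightarrow> complex) \<Rightarrow> nat
    \<Rightarrow> ((nat \<Rightarrow> complex) \<Rightarrow> complex) list" where
  "Ljac n p F i = map (\<lambda>j z. \<Sum>k<p. z (n + k) * pd j (F k) z) [i..<n]"

definition Fpolys :: "nat \<Rightarrow> (nat \<Rightarrow> (nat \<Rightarrow> complex) \<Rightarrow> complex)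
    \<Rightarrow> ((nat \<Rightarrow> complex) \<Rightarrow> complex) list" where
  "Fpolys p F = map F [0..<p]"

definition Xsig :: "nat \<Rightarrow> (nat \<Rightarrow> complex) \<Rightarrow> ((nat \<Rightarrow> complex) \<Rightarrow> complex) list" where
  "Xsig i \<sigma> = map (\<lambda>k z. z k - \<sigma> k) [0..<i - 1]"

definition Lnonzero :: "nat \<Rightarrow> nat \<Rightarrow> (nat \<Rightarrow> complex) \<Rightarrow> bool" where
  "Lnonzero n p z \<longleftrightarrow> (\<exists>k<p. z (n + k) \<noteq> 0)"

definition W :: "nat \<Rightarrow> nat \<Rightarrow> (nat \<Rightarrow> (nat \<Rightarrow> complex) \<Rightarrow> complex) \<Rightarrow> nat
    \<Rightarrow> (nat \<Rightarrow> complex) set" where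
  "W n p F i = {x \<in> zero_set n p F.
      crank (mat p (n - i) (\<lambda>(k, j). pd (i + j) (F k) x)) < p}"

definition H1 :: "nat \<Rightarrow> nat \<Rightarrow> (nat \<Rightarrow> (nat \<Rightarrow> complex) \<Rightarrow> complex) \<Rightarrow> nat \<Rightarrow> bool" where
  "H1 n p F i \<longleftrightarrow> W n p F i = {} \<or> equidim n (W n p F i) (i - 1)"

definition H2 :: "nat \<Rightarrow> nat \<Rightarrow> (nat \<Rightarrow> (nat \<Rightarrow> complex) \<Rightarrow> complex) \<Rightarrow> nat \<Rightarrow> bool" where
  "H2 n p F i \<longleftrightarrow> (\<forall>z\<in>cpoints (n + p). Lnonzero n p z \<longrightarrow>
      (\<forall>g\<in>set (Fpolys p F @ Ljac n p F i). g z = 0) \<longrightarrow>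
      jac_rank (n + p) (Fpolys p F @ Ljac n p F i) z = n + p - i)"

text \<open>Injectivity and integrality of C[X_1..X_(i-1)] -> C[X]/I(W); modulo I(W) means
  equality as functions on W.\<close>
definition H3 :: "nat \<Rightarrow> nat \<Rightarrow> (nat \<Rightarrow> (nat \<Rightarrow> complex) \<Rightarrow> complex) \<Rightarrow> nat \<Rightarrow> bool" where
  "H3 n p F i \<longleftrightarrow> W n p F i = {} \<or>
     ((\<forall>g\<in>polyfun (i - 1). (\<forall>x\<in>W n p F i. g x = 0) \<longrightarrow> (\<forall>x\<in>cpoints n. g x = 0)) \<and>
      (\<forall>h\<in>polyfun n. \<exists>d a. 0 < d \<and> (\<forall>l<d. a l \<in> polyfun (i - 1)) \<and>
          (\<forall>x\<in>W n p F i. h x ^ d + (\<Sum>l<d. a l x * h x ^ l) = 0)))"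

definition H' :: "nat \<Rightarrow> nat \<Rightarrow> (nat \<Rightarrow> (nat \<Rightarrow> complex) \<Rightarrow> complex) \<Rightarrow> nat
    \<Rightarrow> (nat \<Rightarrow> complex) \<Rightarrow> bool" where
  "H' n p F i \<sigma> \<longleftrightarrow> (\<forall>z\<in>cpoints (n + p). Lnonzero n p z \<longrightarrow>
      (\<forall>g\<in>set (Xsig i \<sigma> @ Fpolys p F @ Ljac n p F i). g z = 0) \<longrightarrow>
      jac_rank (n + p) (Xsig i \<sigma> @ Fpolys p F @ Ljac n p F i) z = n + p - 1)"

end

theory Submission
  imports Defs
begin


lemma rank_full_surj:
  fixes A :: "'a::field mat"
  assumes A: "A \<in> carrier_mat m nc" and r: "vec_space.rank m A = m"
    and y: "y \<in> carrier_vec m"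
  shows "\<exists>x\<in>carrier_vec nc. A *\<^sub>v x = y"
proof -
  interpret vec_space "TYPE('a)" m .
  have li0: "lin_indpt {}"
    by (metis (no_types) empty_subsetI fin_dim finite_basis_exists subset_li_is_li vec_vs vectorspace.basis_def)
  obtain S where S: "finite S" "maximal S (\<lambda>T. T \<subseteq> set (cols A) \<and> lin_indpt T)"
    using maximal_exists_superset[of "set (cols A)" "(\<lambda>T. T \<subseteq> set (cols A) \<and> lin_indpt T)" "{}"]
    using li0 by (auto)
  have cS: "card S = m" using rank_card_indpt[OF A S(2)] r by simp
  have Ssub: "S \<subseteq> set (cols A)" and Sli: "lin_indpt S" using S(2) unfolding maximal_def by auto
  have colsc: "set (cols A) \<subseteq> carrier_vec m" using A cols_dim by blast
  have Sc: "S \<subseteq> carrier_vec m" using Ssub colsc by blast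
  have "y \<in> span S"
  proof (rule ccontr)
    assume ny: "y \<notin> span S"
    have yS: "y \<notin> S" using ny in_own_span[OF Sc] by blast
    have "lin_indpt (S \<union> {y})" using lin_dep_iff_in_span[OF Sc Sli _ yS] y ny by simp
    then have "card (S \<union> {y}) \<le> dim" using li_le_dim(2)[OF fin_dim] Sc y by auto
    then show False using dim_is_n cS yS S(1) by simp
  qed
  then have "y \<in> span (set (cols A))" using span_is_monotone[OF Ssub] by blast
  then have "y \<in> col_space A" unfolding col_space_def .
  then show ?thesis using col_space_eq[OF A] A by auto
qed

lemma key_rank:
  fixes A M :: "'a::field mat"
  assumes A: "A \<in> carrier_mat m (Suc m)" and rA: "vec_space.rank m A = m"
    and r: "r \<in> carrier_vec (Suc m)" and e: "e \<in> carrier_vec (Suc m)"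
    and Ae: "A *\<^sub>v e = 0\<^sub>v m" and re: "r \<bullet> e \<noteq> 0"
    and M: "M \<in> carrier_mat (Suc m) (Suc m)"
    and MA: "\<And>a b. a < m \<Longrightarrow> b < Suc m \<Longrightarrow> M $$ (a,b) = A $$ (a,b)"
    and Mr: "\<And>b. b < Suc m \<Longrightarrow> M $$ (m,b) = r $ b"
  shows "vec_space.rank (Suc m) M = Suc m"
proof -
  have "det M \<noteq> 0"
  proof
    assume d0: "det M = 0"
    have MT: "transpose_mat M \<in> carrier_mat (Suc m) (Suc m)" using M by simp
    have "det (transpose_mat M) = 0" using det_transpose[OF M] d0 by simp
    then obtain w where w: "w \<in> carrier_vec (Suc m)" "w \<noteq> 0\<^sub>v (Suc m)"
      "transpose_mat M *\<^sub>v w = 0\<^sub>v (Suc m)"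
      using det_0_iff_vec_prod_zero_field[OF MT] by blast
    have orth: "w \<bullet> (M *\<^sub>v x) = 0" if x: "x \<in> carrier_vec (Suc m)" for x
    proof -
      have "w \<bullet> (M *\<^sub>v x) = (transpose_mat M *\<^sub>v w) \<bullet> x"
        using transpose_vec_mult_scalar[OF M x w(1)] by simp
      also have "\<dots> = 0" using w(3) x by simp
      finally show ?thesis .
    qed
    have expand: "w \<bullet> (M *\<^sub>v x) = (\<Sum>a<m. w $ a * (A *\<^sub>v x) $ a) + w $ m * (r \<bullet> x)"
      if x: "x \<in> carrier_vec (Suc m)" for x
    proof -
      have rowM: "(M *\<^sub>v x) $ a = (A *\<^sub>v x) $ a" if a: "a < m" for a
      proof -
        have "(M *\<^sub>v x) $ a = (\<Sum>b<Suc m. M $$ (a,b) * x $ b)"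
          using M a x by (simp add: scalar_prod_def lessThan_atLeast0)
        also have "\<dots> = (\<Sum>b<Suc m. A $$ (a,b) * x $ b)" using MA a by simp
        also have "\<dots> = (A *\<^sub>v x) $ a"
          using A a x by (simp add: scalar_prod_def lessThan_atLeast0)
        finally show ?thesis .
      qed
      have rowm: "(M *\<^sub>v x) $ m = r \<bullet> x"
      proof -
        have "(M *\<^sub>v x) $ m = (\<Sum>b<Suc m. M $$ (m,b) * x $ b)"
          using M x by (simp add: scalar_prod_def lessThan_atLeast0)
        also have "\<dots> = (\<Sum>b<Suc m. r $ b * x $ b)" using Mr by simp
        also have "\<dots> = r \<bullet> x"
          using r x by (simp add: scalar_prod_def lessThan_atLeast0)
        finally show ?thesis .
      qed
      have "w \<bullet> (M *\<^sub>v x) = (\<Sum>a<Suc m. w $ a * (M *\<^sub>v x) $ a)"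
        using w(1) M x by (simp add: scalar_prod_def lessThan_atLeast0)
      also have "\<dots> = (\<Sum>a<m. w $ a * (M *\<^sub>v x) $ a) + w $ m * (M *\<^sub>v x) $ m" by simp
      also have "\<dots> = (\<Sum>a<m. w $ a * (A *\<^sub>v x) $ a) + w $ m * (r \<bullet> x)"
        using rowM rowm by simp
      finally show ?thesis .
    qed
    have wm: "w $ m = 0"
      using expand[OF e] orth[OF e] Ae re by simp
    have wa: "w $ a = 0" if a: "a < m" for a
    proof -
      obtain x where x: "x \<in> carrier_vec (Suc m)" "A *\<^sub>v x = unit_vec m a"
        using rank_full_surj[OF A rA, of "unit_vec m a"] by auto
      have "(\<Sum>b<m. w $ b * (unit_vec m a) $ b) = w $ a"
        using a by (simp add: unit_vec_def if_distrib cong: if_cong)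
      then show ?thesis using expand[OF x(1)] orth[OF x(1)] wm x(2) by simp
    qed
    have "w = 0\<^sub>v (Suc m)"
      by (rule eq_vecI, insert w(1) wm wa, auto simp: less_Suc_eq)
    then show False using w(2) by simp
  qed
  then show ?thesis using vec_space.det_rank_iff[OF M] by simp
qed


lemma polyfun_local:
  assumes "f \<in> polyfun n" "\<And>j. j < n \<Longrightarrow> x j = y j"
  shows "f x = f y"
  using assms(1) by (induction rule: polyfun.induct) (auto simp: assms(2))

lemma pd_affine:
  assumes "\<And>t. g (z(b:=t)) = \<alpha> * t + \<beta>"
  shows "pd b g z = \<alpha>"
proof -
  have fe: "(\<lambda>t. g (z(b:=t))) = (\<lambda>t. \<alpha> * t + \<beta>)" using assms by auto
  have d: "((\<lambda>t. \<alpha> * t + \<beta>) has_field_derivative \<alpha>) (at (z b))"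
    by (auto intro!: derivative_eq_intros)
  show ?thesis unfolding pd_def fe
    by (rule the_equality, rule d, erule DERIV_unique[OF _ d])
qed

lemma pd_invariant:
  assumes "f \<in> polyfun n" "j < n" "n \<le> b"
  shows "pd j f (z(b:=t)) = pd j f z"
proof -
  have "f ((z(b:=t))(j:=s)) = f (z(j:=s))" for s
    by (rule polyfun_local[OF assms(1)]) (use assms in auto)
  moreover have "(z(b:=t)) j = z j" using assms by auto
  ultimately show ?thesis unfolding pd_def by simp
qed

lemma sum_split_e:
  fixes f :: "nat \<Rightarrow> complex"
  shows "(\<Sum>b<n+p. f b * (if b < n then 0 else z b)) = (\<Sum>k<p. f (n+k) * z (n+k))"
proof -
  let ?h = "\<lambda>b. f b * (if b < n then 0 else z b)"
  have "sum ?h {..<n+p} = sum ?h {0..<n} + sum ?h {n..<n+p}"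
    unfolding lessThan_atLeast0 by (rule sum.atLeastLessThan_concat[symmetric]) auto
  also have "sum ?h {0..<n} = 0" by (rule sum.neutral) auto
  also have "sum ?h {n..<n+p} = (\<Sum>b=n..<n+p. f b * z b)" by (rule sum.cong) auto
  also have "\<dots> = (\<Sum>b=0+n..<p+n. f b * z b)" by (simp only: add.commute add_0)
  also have "\<dots> = (\<Sum>k=0..<p. f (k+n) * z (k+n))" by (rule sum.shift_bounds_nat_ivl)
  also have "\<dots> = (\<Sum>k<p. f (n+k) * z (n+k))" unfolding lessThan_atLeast0 by (simp only: add.commute)
  finally show ?thesis by simp
qed



lemma g_sum_zero:
  assumes F_poly: "\<forall>k<p. F k \<in> polyfun n" and i_ge: "1 \<le> i" and i_le: "i \<le> n"
    and g: "g \<in> set (Xsig i \<sigma> @ Fpolys p F @ Ljac n p F i)" and gz: "g z = 0"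
  shows "(\<Sum>k<p. pd (n+k) g z * z (n+k)) = 0"
proof -
  consider (X) k where "k < i - 1" "g = (\<lambda>z. z k - \<sigma> k)"
    | (F) k where "k < p" "g = F k"
    | (L) j where "i \<le> j" "j < n" "g = (\<lambda>z. \<Sum>k<p. z (n + k) * pd j (F k) z)"
    using g unfolding Xsig_def Fpolys_def Ljac_def by auto
  then show ?thesis
  proof cases
    case (X k)
    have "pd (n+k') g z = 0" for k'
      by (rule pd_affine[where \<beta> = "z k - \<sigma> k"]) (use X i_le in auto)
    then show ?thesis by simp
  next
    case (F k)
    have "pd (n+k') g z = 0" for k'
    proof (rule pd_affine[where \<beta> = "F k z"])
      fix t show "g (z(n+k':=t)) = 0 * t + F k z"
        using polyfun_local[of "F k" n "z(n+k':=t)" z] F F_poly by auto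
    qed
    then show ?thesis by simp
  next
    case (L j)
    have pdL: "pd (n+k') g z = pd j (F k') z" if k': "k' < p" for k'
    proof (rule pd_affine[where \<beta> = "\<Sum>k<p. (z(n+k':=0)) (n + k) * pd j (F k) z"])
      fix t
      have "g (z(n + k' := t)) = (\<Sum>k<p. (z(n+k':=t)) (n + k) * pd j (F k) z)"
        unfolding L(3) using pd_invariant[of _ n j "n+k'"] F_poly L by simp
      also have "\<dots> = (\<Sum>k<p. ((z(n+k':=0)) (n + k) + (if k = k' then t else 0)) * pd j (F k) z)"
        by (rule sum.cong) auto
      also have "\<dots> = (\<Sum>k<p. (z(n+k':=0)) (n + k) * pd j (F k) z) + (\<Sum>k<p. if k = k' then t * pd j (F k) z else 0)"
        by (subst sum.distrib[symmetric], rule sum.cong, auto simp: distrib_right)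
      also have "(\<Sum>k<p. if k = k' then t * pd j (F k) z else 0) = t * pd j (F k') z"
        using k' by (simp add: sum.delta)
      finally show "g (z(n + k' := t)) = pd j (F k') z * t + (\<Sum>k<p. (z(n+k':=0)) (n + k) * pd j (F k) z)"
        by (metis add.commute mult.commute)
    qed
    have "(\<Sum>k<p. pd (n+k) g z * z (n+k)) = (\<Sum>k<p. z (n + k) * pd j (F k) z)"
      using pdL by (simp add: mult.commute)
    also have "\<dots> = g z" using L(3) by simp
    finally show ?thesis using gz by simp
  qed
qed


theorem corollary3:
  fixes n p i :: nat
    and F :: "nat \<Rightarrow> (nat \<Rightarrow> complex) \<Rightarrow> complex"
    and \<sigma> u :: "nat \<Rightarrow> complex"
  assumes F_poly: "\<forall>k<p. F k \<in> polyfun n"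
    and radical: "radical_in n (gen_ideal n p F)"
    and smooth: "smooth_equidim n (zero_set n p F) (n - p)"
    and i_ge: "1 \<le> i" and i_le: "i \<le> (n - p) + 1" and p_le: "p \<le> n"
    and H1: "H1 n p F i" and H2: "H2 n p F i" and H3: "H3 n p F i"
    and H': "H' n p F i \<sigma>"
  shows "\<forall>z\<in>cpoints (n + p).
     (\<forall>g\<in>set (Xsig i \<sigma> @ Fpolys p F @ Ljac n p F i
                 @ [\<lambda>z. (\<Sum>k<p. u k * z (n + k)) - 1]). g z = 0) \<longrightarrow>
     jac_rank (n + p) (Xsig i \<sigma> @ Fpolys p F @ Ljac n p F i
                 @ [\<lambda>z. (\<Sum>k<p. u k * z (n + k)) - 1]) z = n + p"
proof (intro ballI impI)
  fix z assume zc: "z \<in> cpoints (n + p)"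
  define gs where "gs = Xsig i \<sigma> @ Fpolys p F @ Ljac n p F i"
  define lst where "lst = (\<lambda>z::nat\<Rightarrow>complex. (\<Sum>k<p. u k * z (n + k)) - 1)"
  assume allz0: "\<forall>g\<in>set (Xsig i \<sigma> @ Fpolys p F @ Ljac n p F i
                 @ [\<lambda>z. (\<Sum>k<p. u k * z (n + k)) - 1]). g z = 0"
  then have gz: "\<forall>g\<in>set gs. g z = 0" and lz: "lst z = 0"
    unfolding gs_def lst_def by auto
  have sum1: "(\<Sum>k<p. u k * z (n + k)) = 1" using lz unfolding lst_def by simp
  have Lnz: "Lnonzero n p z"
  proof (rule ccontr)
    assume "\<not> Lnonzero n p z"
    then have "\<forall>k<p. z (n+k) = 0" unfolding Lnonzero_def by auto
    then have "(\<Sum>k<p. u k * z (n + k)) = 0" by simp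
    then show False using sum1 by simp
  qed
  then have p1: "p \<ge> 1" unfolding Lnonzero_def by auto
  have i_n: "i \<le> n" using i_le p1 p_le by linarith
  have len: "length gs = n + p - 1"
    unfolding gs_def Xsig_def Fpolys_def Ljac_def using i_ge i_n by simp
  obtain m where m: "n + p = Suc m" using p1 by (cases "n+p") auto
  have lenm: "length gs = m" using len m by simp
  have rankA: "jac_rank (n + p) gs z = n + p - 1"
    using H' zc Lnz gz unfolding H'_def gs_def by blast
  define A where "A = mat m (Suc m) (\<lambda>(a, b). pd b (gs ! a) z)"
  define M where "M = mat (length (gs @ [lst])) (n + p) (\<lambda>(a, b). pd b ((gs @ [lst]) ! a) z)"
  have Ac: "A \<in> carrier_mat m (Suc m)" unfolding A_def by simp
  have Mc: "M \<in> carrier_mat (Suc m) (Suc m)" unfolding M_def using lenm m by simp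
  have rA: "vec_space.rank m A = m"
    using rankA unfolding jac_rank_def crank_def A_def lenm m by simp
  define r where "r = vec (Suc m) (\<lambda>b. pd b lst z)"
  define e where "e = vec (Suc m) (\<lambda>b. if b < n then 0 else z b)"
  have Ae: "A *\<^sub>v e = 0\<^sub>v m"
  proof (rule eq_vecI)
    fix a assume "a < dim_vec (0\<^sub>v m :: complex vec)"
    then have a: "a < m" by simp
    have ga: "gs ! a \<in> set gs" using a lenm by simp
    have "(A *\<^sub>v e) $ a = (\<Sum>b<n+p. pd b (gs ! a) z * (if b < n then 0 else z b))"
      using a unfolding A_def e_def m by (simp add: scalar_prod_def lessThan_atLeast0)
    also have "\<dots> = (\<Sum>k<p. pd (n+k) (gs ! a) z * z (n+k))" by (rule sum_split_e)
    also have "\<dots> = 0"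
      by (rule g_sum_zero[OF F_poly i_ge i_n]) (use ga gz in \<open>auto simp: gs_def\<close>)
    finally show "(A *\<^sub>v e) $ a = 0\<^sub>v m $ a" using a by simp
  qed (simp add: A_def e_def)
  have pdl: "pd (n+k) lst z = u k" if k: "k < p" for k
  proof (rule pd_affine[where \<beta> = "(\<Sum>k'<p. u k' * (z(n+k:=0)) (n + k')) - 1"])
    fix t
    have "lst (z(n+k:=t)) = (\<Sum>k'<p. u k' * ((z(n+k:=0)) (n + k') + (if k' = k then t else 0))) - 1"
      unfolding lst_def by (simp, rule sum.cong, auto)
    also have "\<dots> = (\<Sum>k'<p. u k' * (z(n+k:=0)) (n + k')) + (\<Sum>k'<p. if k' = k then u k' * t else 0) - 1"
      by (subst sum.distrib[symmetric], rule arg_cong[where f = "\<lambda>x. x - 1"], rule sum.cong, auto simp: distrib_left)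
    also have "(\<Sum>k'<p. if k' = k then u k' * t else 0) = u k * t"
      using k by (simp add: sum.delta)
    finally have X: "lst (z(n+k:=t)) = (\<Sum>k'<p. u k' * (z(n+k:=0)) (n + k')) + u k * t - 1" .
    show "lst (z(n+k:=t)) = u k * t + ((\<Sum>k'<p. u k' * (z(n+k:=0)) (n + k')) - 1)"
      unfolding X by (metis add.commute add_diff_eq)
  qed
  have re: "r \<bullet> e = 1"
  proof -
    have "r \<bullet> e = (\<Sum>b<n+p. pd b lst z * (if b < n then 0 else z b))"
      unfolding r_def e_def m by (simp add: scalar_prod_def lessThan_atLeast0)
    also have "\<dots> = (\<Sum>k<p. pd (n+k) lst z * z (n+k))" by (rule sum_split_e)
    also have "\<dots> = (\<Sum>k<p. u k * z (n+k))" using pdl by simp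
    finally show ?thesis using sum1 by simp
  qed
  have MA: "M $$ (a,b) = A $$ (a,b)" if "a < m" "b < Suc m" for a b
    using that lenm m unfolding M_def A_def by (simp add: nth_append)
  have Mr: "M $$ (m,b) = r $ b" if "b < Suc m" for b
    using that lenm m unfolding M_def r_def by (simp add: nth_append)
  have rk: "vec_space.rank (Suc m) M = Suc m"
    by (rule key_rank[OF Ac rA _ _ Ae _ Mc MA Mr]) (use re in \<open>auto simp: r_def e_def\<close>)
  have eq: "Xsig i \<sigma> @ Fpolys p F @ Ljac n p F i @ [\<lambda>z. (\<Sum>k<p. u k * z (n + k)) - 1] = gs @ [lst]"
    by (simp add: gs_def lst_def)
  have "jac_rank (n + p) (gs @ [lst]) z = crank M" unfolding jac_rank_def M_def ..
  also have "\<dots> = vec_space.rank (Suc m) M" unfolding crank_def using Mc by simp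
  finally show "jac_rank (n + p) (Xsig i \<sigma> @ Fpolys p F @ Ljac n p F i
                 @ [\<lambda>z. (\<Sum>k<p. u k * z (n + k)) - 1]) z = n + p"
    unfolding eq using rk m by simp
qed


end
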